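(* Let $M$ be an $n\times n$ positive semidefinite matrix of rank $d$, and write $M=V^TV$ with $V\in\mathbb{R}^{d\times n}$ having columns $v_1,\dots,v_n$. Let $\alpha\ge 0$ and let $c=(c_1,\dots,c_n)$ be an $\alpha$-optimal solution of the program \[ \text{maximize } \ln\det\Big(\sum_{i=1}^n c_iv_iv_i^T\Big)\quad\text{s.t. } \sum_{i=1}^n c_i=d,\ c_i\ge 0\ \ \forall i. \] Let $S$ be a random multiset of $d$ elements of $[n]$, each sampled independently with replacement with $\Pr[\text{element}=\ell]=c_\ell/d$. Then \[ \mathbb{E}\,\det(M_{S,S})\ \ge\ \frac{d!}{d^d}\,e^{-\alpha}\,\mathrm{msd}_d(M), \] and $\frac{d!}{d^d}\sim\sqrt{2\pi d}\,e^{-d}$.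
   Context: For a multiset $S$ of indices, $M_{S,S}$ is the submatrix of $M$ with rows and columns indexed by $S$, repeated according to multiplicity. $\mathrm{msd}_j(M)\coloneqq\max\{\det(M_{T,T}): T\subseteq[n],\ |T|=j\}$. A feasible solution $c$ of a maximization problem with optimal value $v^*$ is $\alpha$-optimal if its objective value is at least $v^*-\alpha$ (with $\ln\det$ of a singular matrix taken to be $-\infty$). *)

theory Defs
  imports "HOL-Analysis.Analysis" "HOL-Library.Landau_Symbols"
    "Jordan_Normal_Form.DL_Rank_Submatrix"
begin

definition psd_mat :: "real mat \<Rightarrow> bool" where
  "psd_mat M \<longleftrightarrow> (\<exists>n. M \<in> carrier_mat n n \<and> M\<^sup>T = M \<and>
      (\<forall>x \<in> carrier_vec n. x \<bullet> (M *\<^sub>v x) \<ge> 0))"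

text \<open>Principal submatrix indexed by a sequence s of length k (a multiset of indices,
  listed with multiplicity); its determinant does not depend on the listing order.\<close>
definition seq_submat :: "'a mat \<Rightarrow> nat \<Rightarrow> (nat \<Rightarrow> nat) \<Rightarrow> 'a mat" where
  "seq_submat M k s = mat k k (\<lambda>(i,j). M $$ (s i, s j))"

definition msd :: "nat \<Rightarrow> real mat \<Rightarrow> real" where
  "msd j M = Max {det (submatrix M T T) | T. T \<subseteq> {0..<dim_row M} \<and> card T = j}"

definition weighted_gram :: "real mat \<Rightarrow> (nat \<Rightarrow> real) \<Rightarrow> real mat" where
  "weighted_gram V c = mat (dim_row V) (dim_row V)
     (\<lambda>(a,b). \<Sum>i<dim_col V. c i * (col V i $ a) * (col V i $ b))"

definition ln_det :: "real mat \<Rightarrow> ereal" where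
  "ln_det A = (if det A > 0 then ereal (ln (det A)) else -\<infinity>)"

definition feasible :: "nat \<Rightarrow> nat \<Rightarrow> (nat \<Rightarrow> real) \<Rightarrow> bool" where
  "feasible n d c \<longleftrightarrow> (\<forall>i<n. c i \<ge> 0) \<and> (\<Sum>i<n. c i) = real d"

definition alpha_optimal :: "real mat \<Rightarrow> real \<Rightarrow> (nat \<Rightarrow> real) \<Rightarrow> bool" where
  "alpha_optimal V \<alpha> c \<longleftrightarrow> feasible (dim_col V) (dim_row V) c \<and>
     ln_det (weighted_gram V c) \<ge>
       (SUP c'\<in>{c'. feasible (dim_col V) (dim_row V) c'}. ln_det (weighted_gram V c')) - ereal \<alpha>"

text \<open>Expectation of det(M_{S,S}) where S consists of d i.i.d. samples from [n]
  with Pr[l] = c l / d.\<close>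
definition expected_det :: "real mat \<Rightarrow> nat \<Rightarrow> (nat \<Rightarrow> real) \<Rightarrow> real" where
  "expected_det M d c = (\<Sum>s\<in>PiE {0..<d} (\<lambda>_. {0..<dim_row M}).
      (\<Prod>k<d. c (s k) / real d) * det (seq_submat M d s))"

end

theory Submission
  imports Defs
begin


definition Um :: "real mat \<Rightarrow> nat \<Rightarrow> (nat \<Rightarrow> nat) \<Rightarrow> real mat" where
  "Um V d s = mat d d (\<lambda>(k,a). V $$ (a, s k))"

lemma Um_carrier[simp]: "Um V d s \<in> carrier_mat d d" by (simp add: Um_def)
lemma Um_dims[simp]: "dim_row (Um V d s) = d" "dim_col (Um V d s) = d" by (simp_all add: Um_def)

lemma wg_carrier: "V \<in> carrier_mat d n \<Longrightarrow> weighted_gram V c \<in> carrier_mat d d"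
  by (simp add: weighted_gram_def)

lemma wg_index: assumes "V \<in> carrier_mat d n" "a < d" "b < d"
  shows "weighted_gram V c $$ (a,b) = (\<Sum>i\<in>{0..<n}. c i * V $$ (a,i) * V $$ (b,i))"
  using assms by (auto simp: weighted_gram_def lessThan_atLeast0 intro!: sum.cong)

lemma detW:
  assumes V: "V \<in> carrier_mat d n"
  shows "Determinant.det (weighted_gram V c) =
    (\<Sum>s\<in>PiE {0..<d} (\<lambda>_. {0..<n}). (\<Prod>a\<in>{0..<d}. c (s a) * V $$ (a, s a)) * Determinant.det (Um V d s))"
proof -
  let ?P = "{p. p permutes {0..<d}}"
  let ?S = "PiE {0..<d} (\<lambda>_. {0..<n})"
  have "Determinant.det (weighted_gram V c) = (\<Sum>p\<in>?P. signof p * (\<Prod>a\<in>{0..<d}. weighted_gram V c $$ (a, p a)))"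
    by (rule det_def'[OF wg_carrier[OF V]])
  also have "\<dots> = (\<Sum>p\<in>?P. signof p * (\<Prod>a\<in>{0..<d}. \<Sum>i\<in>{0..<n}. c i * V $$ (a,i) * V $$ (p a,i)))"
    by (intro sum.cong refl arg_cong2[where f="(*)"] prod.cong) (auto simp: wg_index[OF V] permutes_in_image)
  also have "\<dots> = (\<Sum>p\<in>?P. signof p * (\<Sum>s\<in>?S. \<Prod>a\<in>{0..<d}. c (s a) * V $$ (a,s a) * V $$ (p a,s a)))"
    by (subst prod_sum_PiE) auto
  also have "\<dots> = (\<Sum>p\<in>?P. \<Sum>s\<in>?S. (\<Prod>a\<in>{0..<d}. c (s a) * V $$ (a, s a)) * (signof p * (\<Prod>a\<in>{0..<d}. V $$ (p a,s a))))"
    by (simp add: sum_distrib_left prod.distrib mult_ac)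
  also have "\<dots> = (\<Sum>s\<in>?S. (\<Prod>a\<in>{0..<d}. c (s a) * V $$ (a, s a)) * (\<Sum>p\<in>?P. signof p * (\<Prod>a\<in>{0..<d}. V $$ (p a,s a))))"
    by (subst sum.swap) (simp add: sum_distrib_left)
  also have "\<dots> = (\<Sum>s\<in>?S. (\<Prod>a\<in>{0..<d}. c (s a) * V $$ (a, s a)) * Determinant.det (Um V d s))"
  proof (intro sum.cong refl arg_cong2[where f="(*)"])
    fix s show "(\<Sum>p\<in>?P. signof p * (\<Prod>a\<in>{0..<d}. V $$ (p a,s a))) = Determinant.det (Um V d s)"
      unfolding det_def'[OF Um_carrier]
      by (intro sum.cong refl arg_cong2[where f="(*)"] prod.cong) (auto simp: Um_def permutes_in_image)
  qed
  finally show ?thesis .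
qed

lemma PiE_comp_perm:
  assumes "\<sigma> permutes {0..<d}" "s \<in> PiE {0..<d} (\<lambda>_. B)"
  shows "s \<circ> \<sigma> \<in> PiE {0..<d} (\<lambda>_. B)"
proof -
  have "\<sigma> i \<in> {0..<d}" if "i \<in> {0..<d}" for i using permutes_in_image[OF assms(1)] that by simp
  moreover have "\<sigma> i = i" if "i \<notin> {0..<d}" for i using permutes_not_in[OF assms(1)] that by simp
  ultimately show ?thesis using assms(2) by (auto simp: PiE_iff extensional_def)
qed

lemma Um_perm:
  assumes "\<sigma> permutes {0..<d}"
  shows "Determinant.det (Um V d (s \<circ> \<sigma>)) = signof \<sigma> * Determinant.det (Um V d s)"
proof -
  have "Um V d (s \<circ> \<sigma>) = mat d d (\<lambda>(i,j). Um V d s $$ (\<sigma> i, j))"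
    using assms by (intro eq_matI) (auto simp: Um_def permutes_in_image)
  thus ?thesis using det_permute_rows[OF Um_carrier assms] by simp
qed

lemma detW_perm:
  assumes V: "V \<in> carrier_mat d n" and \<sigma>: "\<sigma> permutes {0..<d}"
  shows "Determinant.det (weighted_gram V c) =
    (\<Sum>s\<in>PiE {0..<d} (\<lambda>_. {0..<n}). (\<Prod>a\<in>{0..<d}. c (s a)) * Determinant.det (Um V d s) *
        (signof \<sigma> * (\<Prod>a\<in>{0..<d}. V $$ (a, s (\<sigma> a)))))"
proof -
  let ?S = "PiE {0..<d} (\<lambda>_. {0..<n})"
  define F where "F s = (\<Prod>a\<in>{0..<d}. c (s a) * V $$ (a, s a)) * Determinant.det (Um V d s)" for s
  have iv: "\<sigma> (Hilbert_Choice.inv \<sigma> x) = x" "Hilbert_Choice.inv \<sigma> (\<sigma> x) = x" for x using permutes_inverses[OF \<sigma>] by auto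
  have iperm: "Hilbert_Choice.inv \<sigma> permutes {0..<d}" using permutes_inv[OF \<sigma>] .
  have reidx: "(\<Sum>s\<in>?S. F (s \<circ> \<sigma>)) = (\<Sum>s\<in>?S. F s)"
  proof (rule sum.reindex_bij_witness[of _ "\<lambda>s. s \<circ> Hilbert_Choice.inv \<sigma>" "\<lambda>s. s \<circ> \<sigma>"])
    fix a assume "a \<in> ?S"
    thus "a \<circ> \<sigma> \<circ> Hilbert_Choice.inv \<sigma> = a" "a \<circ> \<sigma> \<in> ?S" "F (a \<circ> \<sigma>) = F (a \<circ> \<sigma>)"
      using PiE_comp_perm[OF \<sigma>] by (auto simp: o_def iv)
  next
    fix b assume "b \<in> ?S"
    thus "b \<circ> Hilbert_Choice.inv \<sigma> \<circ> \<sigma> = b" "b \<circ> Hilbert_Choice.inv \<sigma> \<in> ?S"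
      using PiE_comp_perm[OF iperm] by (auto simp: o_def iv)
  qed
  have Fs: "F (s \<circ> \<sigma>) = (\<Prod>a\<in>{0..<d}. c (s a)) * Determinant.det (Um V d s) *
        (signof \<sigma> * (\<Prod>a\<in>{0..<d}. V $$ (a, s (\<sigma> a))))" for s
  proof -
    have "(\<Prod>a\<in>{0..<d}. c ((s \<circ> \<sigma>) a)) = (\<Prod>a\<in>{0..<d}. c (s a))"
      using prod.permute[OF \<sigma>, of "\<lambda>a. c (s a)"] by (simp add: o_def)
    thus ?thesis unfolding F_def Um_perm[OF \<sigma>] prod.distrib by (simp add: mult_ac)
  qed
  have e1: "Determinant.det (weighted_gram V c) = (\<Sum>s\<in>?S. F s)"
    using detW[OF V, of c] unfolding F_def by simp
  show ?thesis unfolding e1 reidx[symmetric] by (rule sum.cong[OF refl]) (rule Fs)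
qed

lemma key:
  assumes V: "V \<in> carrier_mat d n"
  shows "fact d * Determinant.det (weighted_gram V c) =
    (\<Sum>s\<in>PiE {0..<d} (\<lambda>_. {0..<n}). (\<Prod>a\<in>{0..<d}. c (s a)) * Determinant.det (Um V d s) ^ 2)"
proof -
  let ?S = "PiE {0..<d} (\<lambda>_. {0..<n})"
  let ?P = "{p. p permutes {0..<d}}"
  have "fact d * Determinant.det (weighted_gram V c) = (\<Sum>\<sigma>\<in>?P. Determinant.det (weighted_gram V c))"
    by (simp add: card_permutations)
  also have "\<dots> = (\<Sum>\<sigma>\<in>?P. \<Sum>s\<in>?S. (\<Prod>a\<in>{0..<d}. c (s a)) * Determinant.det (Um V d s) *
        (signof \<sigma> * (\<Prod>a\<in>{0..<d}. V $$ (a, s (\<sigma> a)))))"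
    by (intro sum.cong refl detW_perm[OF V]) auto
  also have "\<dots> = (\<Sum>s\<in>?S. (\<Prod>a\<in>{0..<d}. c (s a)) * Determinant.det (Um V d s) *
        (\<Sum>\<sigma>\<in>?P. signof \<sigma> * (\<Prod>a\<in>{0..<d}. V $$ (a, s (\<sigma> a)))))"
    by (subst sum.swap) (simp add: sum_distrib_left)
  also have "\<dots> = (\<Sum>s\<in>?S. (\<Prod>a\<in>{0..<d}. c (s a)) * Determinant.det (Um V d s) ^ 2)"
  proof (intro sum.cong refl)
    fix s
    have "(\<Sum>\<sigma>\<in>?P. signof \<sigma> * (\<Prod>a\<in>{0..<d}. V $$ (a, s (\<sigma> a)))) = Determinant.det (transpose_mat (Um V d s))"
      unfolding det_def'[OF transpose_carrier_mat[THEN iffD2, OF Um_carrier]]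
      by (intro sum.cong refl arg_cong2[where f="(*)"] prod.cong) (auto simp: Um_def permutes_in_image)
    also have "\<dots> = Determinant.det (Um V d s)" by (rule det_transpose[OF Um_carrier])
    finally show "(\<Prod>a\<in>{0..<d}. c (s a)) * Determinant.det (Um V d s) *
        (\<Sum>\<sigma>\<in>?P. signof \<sigma> * (\<Prod>a\<in>{0..<d}. V $$ (a, s (\<sigma> a)))) =
      (\<Prod>a\<in>{0..<d}. c (s a)) * Determinant.det (Um V d s) ^ 2" by (simp add: power2_eq_square)
  qed
  finally show ?thesis .
qed

lemma det_UUt: "Determinant.det (Um V d s * transpose_mat (Um V d s)) = Determinant.det (Um V d s) ^ 2"
  by (simp add: det_mult[OF Um_carrier transpose_carrier_mat[THEN iffD2, OF Um_carrier]]
       det_transpose[OF Um_carrier] power2_eq_square)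

lemma det_UtU: "Determinant.det (transpose_mat (Um V d s) * Um V d s) = Determinant.det (Um V d s) ^ 2"
  by (simp add: det_mult[OF transpose_carrier_mat[THEN iffD2, OF Um_carrier] Um_carrier]
       det_transpose[OF Um_carrier] power2_eq_square)

lemma seq_submat_eq:
  assumes V: "V \<in> carrier_mat d n" and M: "M = transpose_mat V * V" and s: "\<And>k. k < d \<Longrightarrow> s k < n"
  shows "Determinant.det (seq_submat M d s) = Determinant.det (Um V d s) ^ 2"
proof -
  have "seq_submat M d s = Um V d s * transpose_mat (Um V d s)"
  proof (rule eq_matI)
    fix i j assume ij: "i < dim_row (Um V d s * transpose_mat (Um V d s))" "j < dim_col (Um V d s * transpose_mat (Um V d s))"
    hence "i < d" "j < d" by auto
    thus "seq_submat M d s $$ (i, j) = (Um V d s * transpose_mat (Um V d s)) $$ (i, j)"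
      using V s unfolding M seq_submat_def Um_def
      by (auto simp: scalar_prod_def intro!: sum.cong)
  qed (auto simp: seq_submat_def)
  thus ?thesis using det_UUt by simp
qed

lemma wg_ge0:
  assumes V: "V \<in> carrier_mat d n" and c: "\<And>i. i < n \<Longrightarrow> c i \<ge> 0"
  shows "Determinant.det (weighted_gram V c) \<ge> 0"
proof -
  have "fact d * Determinant.det (weighted_gram V c) \<ge> 0"
    unfolding key[OF V] using c by (intro sum_nonneg mult_nonneg_nonneg prod_nonneg) (auto simp: PiE_iff)
  moreover have "(fact d :: real) > 0" by simp
  ultimately show ?thesis by (simp add: zero_le_mult_iff)
qed

lemma expected_eq:
  assumes V: "V \<in> carrier_mat d n" and M: "M = transpose_mat V * V"
  shows "expected_det M d c = fact d / real d ^ d * Determinant.det (weighted_gram V c)"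
proof -
  let ?S = "PiE {0..<d} (\<lambda>_. {0..<n})"
  have dM: "dim_row M = n" using V M by simp
  have "expected_det M d c = (\<Sum>s\<in>?S. (\<Prod>k\<in>{0..<d}. c (s k)) / real d ^ d * Determinant.det (Um V d s) ^ 2)"
    unfolding expected_det_def dM lessThan_atLeast0
    by (intro sum.cong refl arg_cong2[where f="(*)"])
       (auto simp: prod_dividef seq_submat_eq[OF V M] PiE_iff)
  also have "\<dots> = (fact d * Determinant.det (weighted_gram V c)) / real d ^ d"
    unfolding key[OF V] by (simp add: sum_divide_distrib)
  finally show ?thesis by simp
qed

lemma pick_bij:
  assumes "finite T" "card T = d"
  shows "bij_betw (pick T) {0..<d} T"
proof -
  have inj: "inj_on (pick T) {0..<d}"
  proof (rule inj_onI)
    fix x y assume "x \<in> {0..<d}" "y \<in> {0..<d}" "pick T x = pick T y"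
    thus "x = y" using pick_mono[of y T x] pick_mono[of x T y] assms
      by (metis atLeastLessThan_iff less_irrefl nat_neq_iff)
  qed
  have sub: "pick T ` {0..<d} \<subseteq> T" using assms pick_in_set by auto
  have "card (pick T ` {0..<d}) = card T" using card_image[OF inj] assms by simp
  hence "pick T ` {0..<d} = T" using card_subset_eq[OF assms(1) sub] by simp
  thus ?thesis using inj by (simp add: bij_betw_def)
qed

lemma sub_eq:
  assumes V: "V \<in> carrier_mat d n" and M: "M = transpose_mat V * V"
    and T: "T \<subseteq> {0..<n}" "card T = d"
  shows "Determinant.det (submatrix M T T) = Determinant.det (weighted_gram V (\<lambda>i. if i \<in> T then 1 else 0))"
proof -
  let ?s = "pick T"
  have fT: "finite T" using T finite_subset by blast
  have bij: "bij_betw ?s {0..<d} T" by (rule pick_bij[OF fT T(2)])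
  have sT: "?s k \<in> T" if "k < d" for k using bij that by (auto simp: bij_betw_def)
  have sn: "?s k < n" if "k < d" for k using sT[OF that] T by auto
  have dM: "dim_row M = n" "dim_col M = n" using V M by auto
  have cT: "{i. i < n \<and> i \<in> T} = T" using T by auto
  have "submatrix M T T = seq_submat M d ?s"
    unfolding submatrix_def seq_submat_def dM cT T(2) by simp
  hence 1: "Determinant.det (submatrix M T T) = Determinant.det (Um V d ?s) ^ 2"
    using seq_submat_eq[OF V M sn] by simp
  have "weighted_gram V (\<lambda>i. if i \<in> T then 1 else 0) = transpose_mat (Um V d ?s) * Um V d ?s"
  proof (rule eq_matI)
    fix a b assume "a < dim_row (transpose_mat (Um V d ?s) * Um V d ?s)" "b < dim_col (transpose_mat (Um V d ?s) * Um V d ?s)"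
    hence ab: "a < d" "b < d" by auto
    have "weighted_gram V (\<lambda>i. if i \<in> T then 1 else 0) $$ (a,b) =
        (\<Sum>i\<in>{0..<n}. (if i \<in> T then 1 else 0) * V $$ (a,i) * V $$ (b,i))"
      by (rule wg_index[OF V ab])
    also have "\<dots> = (\<Sum>i\<in>{0..<n}. if i \<in> T then V $$ (a,i) * V $$ (b,i) else 0)"
      by (intro sum.cong) auto
    also have "\<dots> = (\<Sum>i\<in>{0..<n} \<inter> T. V $$ (a,i) * V $$ (b,i))"
      by (simp add: sum.inter_restrict)
    also have "\<dots> = (\<Sum>i\<in>T. V $$ (a,i) * V $$ (b,i))"
      using T(1) by (simp add: Int_absorb1)
    also have "\<dots> = (\<Sum>k\<in>{0..<d}. V $$ (a,?s k) * V $$ (b,?s k))"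
      by (rule sum.reindex_bij_betw[OF bij, symmetric])
    also have "\<dots> = (transpose_mat (Um V d ?s) * Um V d ?s) $$ (a,b)"
      using ab by (simp add: Um_def scalar_prod_def)
    finally show "weighted_gram V (\<lambda>i. if i \<in> T then 1 else 0) $$ (a,b) = (transpose_mat (Um V d ?s) * Um V d ?s) $$ (a,b)" .
  qed (use V in \<open>auto simp: weighted_gram_def\<close>)
  hence 2: "Determinant.det (weighted_gram V (\<lambda>i. if i \<in> T then 1 else 0)) = Determinant.det (Um V d ?s) ^ 2"
    using det_UtU by simp
  show ?thesis using 1 2 by simp
qed

lemma feasible_ind:
  assumes T: "T \<subseteq> {0..<n}" "card T = d"
  shows "feasible n d (\<lambda>i. if i \<in> T then 1 else 0)"
proof -
  have "(\<Sum>i<n. (if i \<in> T then 1 else 0::real)) = (\<Sum>i\<in>{..<n} \<inter> T. 1)"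
    using sum.inter_restrict[of "{..<n}" "\<lambda>_. 1::real" T] by simp
  also have "{..<n} \<inter> T = T" using T by auto
  finally show ?thesis using T by (simp add: feasible_def)
qed

lemma det_part:
  assumes Mc: "M \<in> carrier_mat n n" and rk: "vec_space.rank n M = d" and V: "V \<in> carrier_mat d n"
    and M: "M = transpose_mat V * V" and al: "\<alpha> \<ge> 0" and opt: "alpha_optimal V \<alpha> c"
  shows "expected_det M d c \<ge> fact d / real d ^ d * exp (-\<alpha>) * msd d M"
proof -
  have dV: "dim_row V = d" "dim_col V = n" using V by auto
  have feas: "feasible n d c" using opt unfolding alpha_optimal_def dV by simp
  hence cnn: "\<And>i. i < n \<Longrightarrow> c i \<ge> 0" unfolding feasible_def by auto
  have dn: "d \<le> n" using vec_space.rank_le_nc[OF Mc] rk by simp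
  define D where "D = {Determinant.det (submatrix M T T) | T. T \<subseteq> {0..<dim_row M} \<and> card T = d}"
  have dM: "dim_row M = n" using Mc by simp
  have "D = (\<lambda>T. Determinant.det (submatrix M T T)) ` {T. T \<subseteq> {0..<n} \<and> card T = d}"
    unfolding D_def dM by auto
  hence finD: "finite D" by simp
  have "{0..<d} \<subseteq> {0..<dim_row M} \<and> card {0..<d} = d" using dn dM by auto
  hence neD: "D \<noteq> {}" unfolding D_def by blast
  have "msd d M \<in> D" unfolding msd_def D_def[symmetric] using Max_in[OF finD neD] .
  then obtain T where T: "T \<subseteq> {0..<n}" "card T = d" and m: "msd d M = Determinant.det (submatrix M T T)"
    unfolding D_def dM by blast
  let ?W = "weighted_gram V c"
  let ?c' = "\<lambda>i. if i \<in> T then 1 else (0::real)"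
  have mW: "msd d M = Determinant.det (weighted_gram V ?c')" using m sub_eq[OF V M T] by simp
  have W0: "Determinant.det ?W \<ge> 0" using wg_ge0[OF V cnn] by simp
  have main: "Determinant.det ?W \<ge> exp (-\<alpha>) * msd d M"
  proof (cases "msd d M > 0")
    case False
    thus ?thesis using W0 by (simp add: mult_nonpos_nonneg mult_le_0_iff order_trans[OF _ W0])
  next
    case True
    have l1: "ln_det (weighted_gram V ?c') = ereal (ln (msd d M))"
      using True mW by (simp add: ln_det_def)
    have "ln_det (weighted_gram V ?c') \<le> (SUP c'\<in>{c'. feasible (dim_col V) (dim_row V) c'}. ln_det (weighted_gram V c'))"
      by (rule SUP_upper) (simp add: dV feasible_ind[OF T])
    hence "ereal (ln (msd d M)) - ereal \<alpha> \<le> (SUP c'\<in>{c'. feasible (dim_col V) (dim_row V) c'}. ln_det (weighted_gram V c')) - ereal \<alpha>"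
      unfolding l1 by (rule ereal_minus_mono) simp
    also have "\<dots> \<le> ln_det ?W" using opt unfolding alpha_optimal_def by simp
    finally have le: "ereal (ln (msd d M) - \<alpha>) \<le> ln_det ?W" by simp
    hence pos: "Determinant.det ?W > 0" by (auto simp: ln_det_def split: if_splits)
    hence "ln (msd d M) - \<alpha> \<le> ln (Determinant.det ?W)" using le by (simp add: ln_det_def)
    hence "exp (ln (msd d M) - \<alpha>) \<le> Determinant.det ?W" using pos
      by (metis exp_le_cancel_iff exp_ln)
    thus ?thesis using True by (simp add: exp_diff mult.commute divide_inverse exp_minus)
  qed
  have "fact d / real d ^ d * exp (-\<alpha>) * msd d M \<le> fact d / real d ^ d * Determinant.det ?W"
  proof -
    have "fact d * (exp (-\<alpha>) * msd d M) \<le> fact d * Determinant.det ?W"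
      using main by (intro mult_left_mono) simp_all
    hence "fact d * (exp (-\<alpha>) * msd d M) / real d ^ d \<le> fact d * Determinant.det ?W / real d ^ d"
      by (intro divide_right_mono) simp_all
    thus ?thesis by simp
  qed
  thus ?thesis using expected_eq[OF V M, of c] by simp
qed




lemma ln_lower: assumes "(t::real) \<ge> 0" shows "t - t^2/2 \<le> ln (1 + t)"
proof -
  let ?f = "\<lambda>x::real. ln (1 + x) - x + x^2/2"
  have "?f 0 \<le> ?f t"
  proof (rule DERIV_nonneg_imp_increasing_open[OF assms])
    fix x :: real assume x: "0 < x" "x < t"
    have "DERIV ?f x :> (1/(1+x) - 1 + x)"
      using x by (auto intro!: derivative_eq_intros)
    moreover have "1/(1+x) - 1 + x \<ge> 0" using x by (simp add: field_simps)
    ultimately show "\<exists>y. DERIV ?f x :> y \<and> y \<ge> 0" by blast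
  next
    show "continuous_on {0..t} ?f" by (intro continuous_intros) auto
  qed
  thus ?thesis by simp
qed

lemma ln_upper: assumes "(t::real) \<ge> 0" shows "ln (1 + t) \<le> t - t^2/2 + t^3/3"
proof -
  let ?f = "\<lambda>x::real. x - x^2/2 + x^3/3 - ln (1 + x)"
  have "?f 0 \<le> ?f t"
  proof (rule DERIV_nonneg_imp_increasing_open[OF assms])
    fix x :: real assume x: "0 < x" "x < t"
    have "DERIV ?f x :> (1 - x + x^2 - 1/(1+x))"
      using x by (auto intro!: derivative_eq_intros simp: power2_eq_square)
    moreover have "1 - x + x^2 - 1/(1+x) \<ge> 0" using x by (simp add: field_simps power2_eq_square)
    ultimately show "\<exists>y. DERIV ?f x :> y \<and> y \<ge> 0" by blast
  next
    show "continuous_on {0..t} ?f" by (intro continuous_intros) auto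
  qed
  thus ?thesis by simp
qed

definition st_y :: "nat \<Rightarrow> real" where
  "st_y n = fact n * exp (real n) / (real n ^ n * sqrt (real n))"
definition st_x :: "nat \<Rightarrow> real" where
  "st_x n = ln (fact n) + real n - real n * ln (real n) - ln (real n) / 2"

lemma ys_pos: "n \<ge> 1 \<Longrightarrow> st_y n > 0"
  by (simp add: st_y_def)

lemma ln_ys: assumes "n \<ge> 1" shows "ln (st_y n) = st_x n"
proof -
  have "ln (st_y n) = ln (fact n) + real n - ln (real n ^ n) - ln (sqrt (real n))"
    using assms unfolding st_y_def by (simp add: ln_div ln_mult)
  also have "ln (real n ^ n) = real n * ln (real n)" using assms by (simp add: ln_realpow)
  also have "ln (sqrt (real n)) = ln (real n) / 2" using assms by (simp add: ln_sqrt)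
  finally show ?thesis by (simp add: st_x_def)
qed

lemma xs_step: assumes "n \<ge> 1"
  shows "st_x n - st_x (Suc n) = (real n + 1/2) * ln (1 + 1 / real n) - 1"
proof -
  have l1: "ln (1 + 1 / real n) = ln (real n + 1) - ln (real n)"
  proof -
    have "1 + 1 / real n = (real n + 1) / real n" using assms by (simp add: field_simps)
    thus ?thesis using assms by (simp add: ln_div)
  qed
  have l2: "ln (fact (Suc n) :: real) = ln (real n + 1) + ln (fact n)"
    by (simp add: ln_mult add.commute)
  show ?thesis unfolding st_x_def l1 l2 by (simp add: algebra_simps)
qed

lemma d_bound: assumes "n \<ge> 1"
  shows "\<bar>(real n + 1/2) * ln (1 + 1 / real n) - 1\<bar> \<le> 1 / real n ^ 2"
proof -
  let ?t = "1 / real n"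
  have t: "?t \<ge> 0" by simp
  have n: "real n \<ge> 1" using assms by simp
  have lo: "(real n + 1/2) * (?t - ?t^2/2) \<le> (real n + 1/2) * ln (1 + ?t)"
    by (intro mult_left_mono ln_lower t) simp
  have up: "(real n + 1/2) * ln (1 + ?t) \<le> (real n + 1/2) * (?t - ?t^2/2 + ?t^3/3)"
    by (intro mult_left_mono ln_upper t) simp
  have e1: "(real n + 1/2) * (?t - ?t^2/2) - 1 = - 1 / (4 * real n ^ 2)"
    using n by (simp add: field_simps power2_eq_square)
  have e2: "(real n + 1/2) * (?t - ?t^2/2 + ?t^3/3) - 1 = 1 / (12 * real n ^ 2) + 1 / (6 * real n ^ 3)"
    using n by (simp add: field_simps power2_eq_square power3_eq_cube)
  have b1: "1 / (4 * real n ^ 2) \<le> 1 / real n ^ 2" using n by (simp add: field_simps)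
  have b2: "1 / (12 * real n ^ 2) + 1 / (6 * real n ^ 3) \<le> 1 / real n ^ 2"
  proof -
    have "1 / (6 * real n ^ 3) \<le> 1 / (6 * real n ^ 2)"
      using n by (intro divide_left_mono mult_left_mono) (auto simp: power_increasing)
    moreover have "1 / (12 * real n ^ 2) + 1 / (6 * real n ^ 2) \<le> 1 / real n ^ 2"
      using n by (simp add: field_simps)
    ultimately show ?thesis by linarith
  qed
  show ?thesis unfolding abs_le_iff using lo up e1 e2 b1 b2 by linarith
qed

lemma ys_conv: "\<exists>A>0. st_y \<longlonglongrightarrow> A"
proof -
  define e where "e k = st_x (Suc k) - st_x (Suc (Suc k))" for k
  have eb: "norm (e k) \<le> inverse (real (Suc k) ^ 2)" for k
  proof -
    have "e k = (real (Suc k) + 1/2) * ln (1 + 1 / real (Suc k)) - 1"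
      unfolding e_def by (rule xs_step) simp
    hence "norm (e k) = \<bar>(real (Suc k) + 1/2) * ln (1 + 1 / real (Suc k)) - 1\<bar>" by simp
    also have "\<dots> \<le> 1 / real (Suc k) ^ 2" by (rule d_bound) simp
    finally show ?thesis by (simp add: divide_inverse)
  qed
  have "summable (\<lambda>k. inverse (real (Suc k) ^ 2))"
    using inverse_power_summable[of 2, where 'a=real] summable_Suc_iff[where f="\<lambda>n. inverse (real n ^ 2)"]
    by simp
  hence se: "summable e" by (rule summable_comparison_test[rotated]) (use eb in auto)
  have tel: "st_x (Suc n) = st_x 1 - (\<Sum>k<n. e k)" for n
    unfolding e_def using sum_lessThan_telescope'[of "\<lambda>k. st_x (Suc k)" n] by simp
  have "(\<lambda>n. st_x (Suc n)) \<longlonglongrightarrow> st_x 1 - suminf e"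
    unfolding tel by (intro tendsto_intros summable_LIMSEQ se)
  hence "(\<lambda>n. exp (st_x (Suc n))) \<longlonglongrightarrow> exp (st_x 1 - suminf e)" by (rule tendsto_exp)
  moreover have "exp (st_x (Suc n)) = st_y (Suc n)" for n
  proof -
    have "exp (st_x (Suc n)) = exp (ln (st_y (Suc n)))" using ln_ys[of "Suc n"] by simp
    also have "\<dots> = st_y (Suc n)" by (intro exp_ln ys_pos) simp
    finally show ?thesis .
  qed
  ultimately have "(\<lambda>n. st_y (Suc n)) \<longlonglongrightarrow> exp (st_x 1 - suminf e)" by simp
  hence "st_y \<longlonglongrightarrow> exp (st_x 1 - suminf e)" by (rule LIMSEQ_imp_Suc)
  thus ?thesis using exp_gt_zero by blast
qed

lemma alg_aux:
  fixes F G E P S Q r T :: real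
  assumes "F > 0" "G > 0" "E > 0" "P > 0" "S > 0" "Q > 0" "r > 0" "T > 0"
  shows "F * S / (G / (Q * F) * T) = (F * E / (P * S))^2 / (G * E^2 / (Q * P^2 * (r * S))) * S^2 / (r * T)"
  using assms by (simp add: field_simps power2_eq_square)

lemma G_eq: assumes "n \<ge> 1"
  shows "Gamma_series (1/2::real) n = st_y n ^ 2 / st_y (2*n) * real n / (sqrt 2 * (real n + 1/2))"
proof -
  have n: "real n > 0" using assms by simp
  have sq: "exp (1/2 * ln (real n)) = sqrt (real n)"
  proof -
    have "exp (1/2 * ln (real n)) = exp (ln (sqrt (real n)))" using n by (simp add: ln_sqrt)
    also have "\<dots> = sqrt (real n)" using n by (intro exp_ln) simp
    finally show ?thesis .
  qed
  have g: "Gamma_series (1/2::real) n = fact n * sqrt (real n) / (pochhammer (1/2) n * (1/2 + real n))"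
  proof -
    have sq': "exp (ln (real n) / 2) = sqrt (real n)" using sq by simp
    show ?thesis unfolding Gamma_series_def by (simp add: sq' pochhammer_Suc)
  qed
  have p: "pochhammer (1/2::real) n = fact (2*n) / (2^(2*n) * fact n)"
    using fact_double[of n, where 'a=real] by (simp add: field_simps)
  have e2: "exp (real (2*n)) = exp (real n) ^ 2"
  proof -
    have "exp (real (2*n)) = exp (real n + real n)" by simp
    thus ?thesis by (simp only: exp_add power2_eq_square)
  qed
  have p2: "real (2*n) ^ (2*n) = 2^(2*n) * (real n ^ n)^2"
  proof -
    have "real (2*n) ^ (2*n) = (2 * real n) ^ (2*n)" by simp
    also have "\<dots> = 2^(2*n) * real n ^ (2*n)" by (rule power_mult_distrib)
    also have "real n ^ (2*n) = (real n ^ n)^2" by (simp add: power_mult[symmetric] mult.commute)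
    finally show ?thesis .
  qed
  have s2: "sqrt (real (2*n)) = sqrt 2 * sqrt (real n)" by (simp add: real_sqrt_mult)
  have sn: "sqrt (real n) ^ 2 = real n" by simp
  have "Gamma_series (1/2::real) n = fact n * sqrt (real n) / (fact (2*n) / (2^(2*n) * fact n) * (sqrt (real n)^2 + 1/2))"
    unfolding g p sn by (simp add: add.commute)
  also have "\<dots> = (fact n * exp (real n) / (real n ^ n * sqrt (real n)))^2 /
      (fact (2*n) * exp (real n)^2 / (2^(2*n) * (real n ^ n)^2 * (sqrt 2 * sqrt (real n)))) * sqrt (real n)^2 / (sqrt 2 * (sqrt (real n)^2 + 1/2))"
    by (rule alg_aux) (use n in auto)
  also have "\<dots> = st_y n ^ 2 / st_y (2*n) * real n / (sqrt 2 * (real n + 1/2))"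
    unfolding st_y_def e2 p2 s2 sn ..
  finally show ?thesis .
qed

lemma ys_lim: "st_y \<longlonglongrightarrow> sqrt (2 * pi)"
proof -
  obtain A where A: "A > 0" "st_y \<longlonglongrightarrow> A" using ys_conv by blast
  have sm: "strict_mono (\<lambda>n::nat. 2 * n)" by (auto simp: strict_mono_def)
  have y2: "(\<lambda>n. st_y (2 * n)) \<longlonglongrightarrow> A" using LIMSEQ_subseq_LIMSEQ[OF A(2) sm] by (simp add: o_def)
  have q1: "(\<lambda>n. 1 / (1 + 1/2 * (1 / real n))) \<longlonglongrightarrow> 1 / (1 + 1/2 * 0)"
    by (intro tendsto_intros lim_1_over_n) simp
  have "eventually (\<lambda>n. 1 / (1 + 1/2 * (1 / real n)) = real n / (real n + 1/2)) sequentially"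
    using eventually_ge_at_top[of "1::nat"] by eventually_elim (simp add: field_simps)
  from tendsto_cong[OF this] q1 have q: "(\<lambda>n. real n / (real n + 1/2)) \<longlonglongrightarrow> 1" by simp
  define H where "H n = st_y n ^ 2 / st_y (2*n) * (real n / (real n + 1/2) / sqrt 2)" for n
  have "H \<longlonglongrightarrow> A ^ 2 / A * (1 / sqrt 2)"
    unfolding H_def using A(1) by (intro tendsto_intros A(2) y2 q) auto
  moreover have "eventually (\<lambda>n. Gamma_series (1/2::real) n = H n) sequentially"
    using eventually_ge_at_top[of "1::nat"] by eventually_elim (simp add: G_eq H_def)
  hence "H \<longlonglongrightarrow> sqrt pi"
    using tendsto_cong Gamma_series_LIMSEQ[of "1/2::real"] Gamma_one_half_real by fastforce
  ultimately have "A ^ 2 / A * (1 / sqrt 2) = sqrt pi" using LIMSEQ_unique by blast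
  hence "A = sqrt 2 * sqrt pi" using A(1) by (simp add: field_simps power2_eq_square)
  hence "A = sqrt (2 * pi)" by (simp add: real_sqrt_mult)
  thus ?thesis using A(2) by simp
qed

lemma stirling_ratio:
  "(\<lambda>k::nat. fact k / real k ^ k) \<sim>[at_top] (\<lambda>k. sqrt (2 * pi * real k) * exp (- real k))"
proof (rule asymp_equivI')
  have "(\<lambda>k. st_y k / sqrt (2 * pi)) \<longlonglongrightarrow> sqrt (2 * pi) / sqrt (2 * pi)"
    by (intro tendsto_intros ys_lim) simp
  hence l: "(\<lambda>k. st_y k / sqrt (2 * pi)) \<longlonglongrightarrow> 1" by simp
  have "eventually (\<lambda>k. st_y k / sqrt (2 * pi) = fact k / real k ^ k / (sqrt (2 * pi * real k) * exp (- real k))) sequentially"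
    using eventually_ge_at_top[of "1::nat"]
  proof eventually_elim
    case (elim k)
    hence k: "real k > 0" by simp
    show ?case unfolding st_y_def real_sqrt_mult[of "2*pi"] exp_minus using k
      by (simp add: field_simps)
  qed
  from tendsto_cong[OF this] l show "((\<lambda>k. fact k / real k ^ k / (sqrt (2 * pi * real k) * exp (- real k))) \<longlongrightarrow> 1) at_top"
    by simp
qed


theorem theorem3p2:
  fixes M V :: "real mat" and n d :: nat and \<alpha> :: real and c :: "nat \<Rightarrow> real"
  assumes "M \<in> carrier_mat n n" and "psd_mat M" and "vec_space.rank n M = d"
    and "V \<in> carrier_mat d n" and "M = V\<^sup>T * V"
    and "\<alpha> \<ge> 0" and "alpha_optimal V \<alpha> c"
  shows "expected_det M d c \<ge> fact d / real d ^ d * exp (-\<alpha>) * msd d M \<and>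
    (\<lambda>k::nat. fact k / real k ^ k) \<sim>[at_top] (\<lambda>k. sqrt (2 * pi * real k) * exp (- real k))"
    using det_part[OF assms(1,3,4,5,6,7)] stirling_ratio by blast

end
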